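(* Run MUDAN on a reported profile $\theta'$ with nonempty final winner set $W$, and let $w^*$ be the last buyer added to $W$. If a buyer $y$ has reported valuation strictly larger than the reported valuation of every winner, i.e. $v'_y>v'_w$ for all $w\in W$, then $w^*$ is critical for $y$: every directed path from $s$ to $y$ in $G_{\theta'}$ passes through $w^*$. In particular, under truthful reporting ($\theta'=\theta$), such a $y$ does not belong to $B^*$, the set of buyers for which $w^*$ is not critical.
   Context: Single-demand model. A seller $s$ has $m\ge 1$ identical items. Buyers $B=\{1,\dots,n\}$; buyer $i$ has a true valuation $v_i\in\mathbb{R}_{\ge0}$ and true neighbour set $r_i\subseteq B$; the seller has a fixed neighbour set $r_s\subseteq B$. Buyer $i$ reports $(v'_i,r'_i)$ with $v'_i\ge 0$, $r'_i\subseteq r_i$; the truthful profile is $\theta$. The profile graph $G_{\theta'}$ is the directed graph on $\{s\}\cup B$ with an edge $(x,y)$ iff $y\in r'_x$ (for $x=s$ use $r_s$). A buyer $w$ is critical for a buyer $i$ if every directed path from $s$ to $i$ in $G_{\theta'}$ passes through $w$. Priority rule: each buyer $i$ is given a priority $\sigma_i$ that is a function of its reported neighbour set $r'_i$ only (e.g. $\sigma_i=|r'_i|$), independent of all reported valuations and non-decreasing with respect to inclusion of $r'_i$; ties are broken by a fixed total order on buyers. MUDAN, run on a reported profile $\theta'$. It maintains an explored set $A\subseteq B$, a winner set $W\subseteq A$, remaining supply $m'=m-|W|$, and tentative payments. For current $A,W$ the potential-winner set $P(A,W)$ is: $P=A$ if $|A\setminus W|\le m'$; otherwise $P=W\cup\{$the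 $m'$ buyers of $A\setminus W$ with highest reported valuations$\}$ (ties broken by a fixed total order). Buyers in $A\setminus P$ are called exhausted. Initialise $A=r_s$, $W=\varnothing$, and repeat: (1) Closure: while some buyer $x\in W\cup(A\setminus P(A,W))$ (with $P$ recomputed from the current $A,W$) has $r'_x\not\subseteq A$, set $A\leftarrow A\cup r'_x$. (2) Let $P=P(A,W)$; if $P\setminus W=\varnothing$, stop. (3) Let $w$ be the buyer of $P\setminus W$ with highest priority; set its tentative payment $\hat p_w$ to the $(m'+1)$-th highest reported valuation in $A\setminus W$ (current $m'$, before adding $w$), or $0$ if $|A\setminus W|\le m'$; add $w$ to $W$. Output: every $w\in W$ gets an item and pays $\hat p_w$; other buyers get nothing and pay $0$. *)

theory Defs
  imports Complex_Main
begin

text \<open>Buyers have an arbitrary type 'b with a linear order; this linear order is the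
fixed total order used for all tie-breaking (smaller in the order = preferred).
Vertices of the profile graph are of type 'b option: None is the seller s,
Some i is buyer i.\<close>

definition pg_edge :: "'b set \<Rightarrow> ('b \<Rightarrow> 'b set) \<Rightarrow> 'b option \<Rightarrow> 'b option \<Rightarrow> bool" where
  "pg_edge rs r' x y =
     (case (x, y) of
        (None, Some b) \<Rightarrow> b \<in> rs
      | (Some a, Some b) \<Rightarrow> b \<in> r' a
      | _ \<Rightarrow> False)"

definition pg_path :: "'b set \<Rightarrow> ('b \<Rightarrow> 'b set) \<Rightarrow> 'b \<Rightarrow> 'b option list \<Rightarrow> bool" where
  "pg_path rs r' i p =
     (p \<noteq> [] \<and> hd p = None \<and> last p = Some i \<and> distinct p \<and>
      (\<forall>k. Suc k < length p \<longrightarrow> pg_edge rs r' (p ! k) (p ! Suc k)))"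

definition critical :: "'b set \<Rightarrow> ('b \<Rightarrow> 'b set) \<Rightarrow> 'b \<Rightarrow> 'b \<Rightarrow> bool" where
  "critical rs r' w i = (\<forall>p. pg_path rs r' i p \<longrightarrow> Some w \<in> set p)"

definition Bstar :: "'b set \<Rightarrow> 'b set \<Rightarrow> ('b \<Rightarrow> 'b set) \<Rightarrow> 'b \<Rightarrow> 'b set" where
  "Bstar B rs r' w = {i \<in> B. \<not> critical rs r' w i}"

definition val_better :: "('b::linorder \<Rightarrow> real) \<Rightarrow> 'b \<Rightarrow> 'b \<Rightarrow> bool" where
  "val_better v z x = (v z > v x \<or> (v z = v x \<and> z < x))"

definition top_k :: "('b::linorder \<Rightarrow> real) \<Rightarrow> nat \<Rightarrow> 'b set \<Rightarrow> 'b set" where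
  "top_k v k S = {x \<in> S. card {z \<in> S. val_better v z x} < k}"

text \<open>Potential-winner set P(A,W), with m' the remaining supply.\<close>
definition pot_win :: "('b::linorder \<Rightarrow> real) \<Rightarrow> nat \<Rightarrow> 'b set \<Rightarrow> 'b set \<Rightarrow> 'b set" where
  "pot_win v m' A W =
     (if card (A - W) \<le> m' then A else W \<union> top_k v m' (A - W))"

text \<open>(k+1)-th highest valuation in S (k counted from 0), 0 if |S| <= k.\<close>
definition kth_price :: "('b::linorder \<Rightarrow> real) \<Rightarrow> nat \<Rightarrow> 'b set \<Rightarrow> real" where
  "kth_price v k S =
     (if card S \<le> k then 0 else rev (sort (map v (sorted_list_of_set S))) ! k)"

definition prio_max :: "('b set \<Rightarrow> real) \<Rightarrow> ('b \<Rightarrow> 'b set) \<Rightarrow> 'b::linorder set \<Rightarrow> 'b \<Rightarrow> bool" where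
  "prio_max \<sigma> r' S w =
     (w \<in> S \<and> (\<forall>z\<in>S. z \<noteq> w \<longrightarrow>
        \<sigma> (r' z) < \<sigma> (r' w) \<or> (\<sigma> (r' z) = \<sigma> (r' w) \<and> w < z)))"

text \<open>State: explored set A, winners as a list in order of addition, tentative payments.\<close>
type_synonym 'b mstate = "'b set \<times> 'b list \<times> ('b \<Rightarrow> real)"

definition closure_cand :: "nat \<Rightarrow> ('b::linorder \<Rightarrow> real) \<Rightarrow> ('b \<Rightarrow> 'b set) \<Rightarrow> 'b set \<Rightarrow> 'b list \<Rightarrow> 'b \<Rightarrow> bool" where
  "closure_cand m v r' A ws x =
     (x \<in> set ws \<union> (A - pot_win v (m - length ws) A (set ws)) \<and> \<not> r' x \<subseteq> A)"

inductive mudan_step ::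
  "nat \<Rightarrow> ('b set \<Rightarrow> real) \<Rightarrow> ('b::linorder \<Rightarrow> real) \<Rightarrow> ('b \<Rightarrow> 'b set) \<Rightarrow> 'b mstate \<Rightarrow> 'b mstate \<Rightarrow> bool"
  for m \<sigma> v r' where
  closure: "closure_cand m v r' A ws x \<Longrightarrow>
     mudan_step m \<sigma> v r' (A, ws, pay) (A \<union> r' x, ws, pay)"
| add_winner: "\<lbrakk> \<forall>x. \<not> closure_cand m v r' A ws x;
     prio_max \<sigma> r' (pot_win v (m - length ws) A (set ws) - set ws) w \<rbrakk> \<Longrightarrow>
     mudan_step m \<sigma> v r' (A, ws, pay)
       (A, ws @ [w], pay(w := kth_price v (m - length ws) (A - set ws)))"

definition mudan_init :: "'b set \<Rightarrow> 'b mstate" where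
  "mudan_init rs = (rs, [], (\<lambda>_. 0))"

definition mudan_final ::
  "nat \<Rightarrow> ('b set \<Rightarrow> real) \<Rightarrow> 'b set \<Rightarrow> ('b::linorder \<Rightarrow> real) \<Rightarrow> ('b \<Rightarrow> 'b set) \<Rightarrow> 'b mstate \<Rightarrow> bool" where
  "mudan_final m \<sigma> rs v r' st =
     (case st of (A, ws, pay) \<Rightarrow>
        (mudan_step m \<sigma> v r')\<^sup>*\<^sup>* (mudan_init rs) st \<and>
        (\<forall>x. \<not> closure_cand m v r' A ws x) \<and>
        pot_win v (m - length ws) A (set ws) - set ws = {})"

end

theory Submission imports Defs begin

lemma top_k_sub: "top_k v k S \<subseteq> S" by (auto simp: top_k_def)

lemma pot_win_sub: "W \<subseteq> A \<Longrightarrow> pot_win v k A W \<subseteq> A"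
  using top_k_sub[of v k "A - W"] by (auto simp: pot_win_def)

definition Inv where
 "Inv m \<sigma> v r' rs B st = (case st of (A, ws, pay) \<Rightarrow> rs \<subseteq> A \<and> A \<subseteq> B \<and> set ws \<subseteq> A \<and>
   (ws \<noteq> [] \<longrightarrow> (\<exists>A0. rs \<subseteq> A0 \<and> A0 \<subseteq> B \<and> set (butlast ws) \<subseteq> A0 \<and>
      (\<forall>x. \<not> closure_cand m v r' A0 (butlast ws) x) \<and>
      prio_max \<sigma> r' (pot_win v (m - length (butlast ws)) A0 (set (butlast ws)) - set (butlast ws)) (last ws))))"

lemma inv:
  assumes "(mudan_step m \<sigma> v r')\<^sup>*\<^sup>* (mudan_init rs) st" "rs \<subseteq> B" "\<forall>i\<in>B. r' i \<subseteq> B"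
  shows "Inv m \<sigma> v r' rs B st"
  using assms(1)
proof (induction rule: rtranclp_induct)
  case base
  then show ?case using assms by (simp add: Inv_def mudan_init_def)
next
  case (step s t)
  from step.hyps(2) show ?case
  proof cases
    case (closure A ws x pay)
    have I: "rs \<subseteq> A" "A \<subseteq> B" "set ws \<subseteq> A"
      "ws \<noteq> [] \<longrightarrow> (\<exists>A0. rs \<subseteq> A0 \<and> A0 \<subseteq> B \<and> set (butlast ws) \<subseteq> A0 \<and>
      (\<forall>x. \<not> closure_cand m v r' A0 (butlast ws) x) \<and>
      prio_max \<sigma> r' (pot_win v (m - length (butlast ws)) A0 (set (butlast ws)) - set (butlast ws)) (last ws))"
      using step.IH unfolding closure(1) Inv_def by simp_all
    have "x \<in> A" using closure(3) unfolding closure_cand_def using I(3) by blast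
    then have "r' x \<subseteq> B" using I(2) assms(3) by blast
    then show ?thesis unfolding closure(2) Inv_def using I by auto
  next
    case (add_winner A ws w pay)
    have I: "rs \<subseteq> A" "A \<subseteq> B" "set ws \<subseteq> A"
      using step.IH unfolding add_winner(1) Inv_def by simp_all
    have "w \<in> A" using add_winner(4) pot_win_sub[OF I(3), of v "m - length ws"]
      unfolding prio_max_def by blast
    then show ?thesis unfolding add_winner(2) Inv_def using I add_winner(3,4) by auto
  qed
qed

lemma path_in:
  assumes "pg_path rs r' y p" "rs \<subseteq> C" "\<forall>a. Some a \<in> set p \<longrightarrow> a \<in> C \<longrightarrow> r' a \<subseteq> C"
  shows "y \<in> C"
proof -
  have "\<forall>b. k < length p \<longrightarrow> p ! k = Some b \<longrightarrow> b \<in> C" for k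
  proof (induction k)
    case 0
    then show ?case using assms(1) by (cases p) (auto simp: pg_path_def)
  next
    case (Suc k)
    show ?case
    proof (intro allI impI)
      fix b assume h: "Suc k < length p" "p ! Suc k = Some b"
      have e: "pg_edge rs r' (p ! k) (p ! Suc k)" using assms(1) h(1) by (auto simp: pg_path_def)
      show "b \<in> C"
      proof (cases "p ! k")
        case None
        then show ?thesis using e h assms(2) by (auto simp: pg_edge_def)
      next
        case (Some a)
        have "a \<in> C" using Suc.IH Some h(1) by auto
        moreover have "Some a \<in> set p" using Some h(1) by (metis Suc_lessD nth_mem)
        ultimately show ?thesis using e h assms(3) Some by (auto simp: pg_edge_def)
      qed
    qed
  qed
  moreover have "length p - 1 < length p" "p ! (length p - 1) = Some y"
    using assms(1) by (auto simp: pg_path_def last_conv_nth)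
  ultimately show ?thesis by blast
qed

lemma best_exists:
  fixes v :: "'b::linorder \<Rightarrow> real"
  assumes "finite S" "S \<noteq> {}"
  shows "\<exists>x\<in>S. \<forall>z\<in>S. \<not> val_better v z x"
proof -
  define M where "M = Max (v ` S)"
  define T where "T = {x\<in>S. v x = M}"
  have "T \<noteq> {}"
  proof -
    have "M \<in> v ` S" unfolding M_def using assms by (intro Max_in) auto
    then show ?thesis unfolding T_def by auto
  qed
  have fT: "finite T" using assms by (auto simp: T_def)
  define x0 where "x0 = Min T"
  have "x0 \<in> T" using fT \<open>T \<noteq> {}\<close> by (simp add: x0_def)
  moreover have "\<forall>z\<in>S. \<not> val_better v z x0"
  proof
    fix z assume z: "z \<in> S"
    have "v z \<le> M" using assms z by (simp add: M_def)
    moreover have "v z = M \<Longrightarrow> x0 \<le> z" using z fT by (auto simp: x0_def T_def)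
    ultimately show "\<not> val_better v z x0" using \<open>x0 \<in> T\<close> by (auto simp: val_better_def T_def)
  qed
  ultimately show ?thesis by (auto simp: T_def)
qed

lemma empty_coll: "{z\<in>S. P z} = {} \<Longrightarrow> x \<in> S \<Longrightarrow> \<not> P x" by auto

lemma val_total: "\<not> val_better (v::'b::linorder\<Rightarrow>real) w x \<Longrightarrow> \<not> val_better v x w \<Longrightarrow> x \<noteq> w \<Longrightarrow> False"
  unfolding val_better_def by (auto simp: not_less neq_iff)

theorem lemma4:
  fixes B :: "'b::linorder set" and rs :: "'b set" and r' :: "'b \<Rightarrow> 'b set"
    and v' :: "'b \<Rightarrow> real" and m :: nat and \<sigma> :: "'b set \<Rightarrow> real"
    and A :: "'b set" and ws :: "'b list" and pay :: "'b \<Rightarrow> real" and y :: 'b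
  assumes "finite B" and "rs \<subseteq> B" and "\<forall>i\<in>B. r' i \<subseteq> B"
    and "\<forall>i\<in>B. v' i \<ge> 0" and "m \<ge> 1"
    and "\<forall>S T. S \<subseteq> T \<longrightarrow> \<sigma> S \<le> \<sigma> T"
    and "mudan_final m \<sigma> rs v' r' (A, ws, pay)"
    and "ws \<noteq> []"
    and "y \<in> B" and "\<forall>w\<in>set ws. v' y > v' w"
  shows "critical rs r' (last ws) y \<and> y \<notin> Bstar B rs r' (last ws)"
proof -
  have F: "(mudan_step m \<sigma> v' r')\<^sup>*\<^sup>* (mudan_init rs) (A, ws, pay) \<and>
     (\<forall>x. \<not> closure_cand m v' r' A ws x) \<and>
     pot_win v' (m - length ws) A (set ws) - set ws = {}"
    using assms(7) unfolding mudan_final_def by simp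
  have reach: "(mudan_step m \<sigma> v' r')\<^sup>*\<^sup>* (mudan_init rs) (A, ws, pay)"
    using F by blast
  have noclos: "\<forall>x. \<not> closure_cand m v' r' A ws x" using F by blast
  have Pempty: "pot_win v' (m - length ws) A (set ws) - set ws = {}" using F by blast
  have I: "Inv m \<sigma> v' r' rs B (A, ws, pay)" using inv[OF reach assms(2,3)] .
  have I2: "rs \<subseteq> A \<and> A \<subseteq> B \<and> set ws \<subseteq> A \<and>
   (ws \<noteq> [] \<longrightarrow> (\<exists>A0. rs \<subseteq> A0 \<and> A0 \<subseteq> B \<and> set (butlast ws) \<subseteq> A0 \<and>
      (\<forall>x. \<not> closure_cand m v' r' A0 (butlast ws) x) \<and>
      prio_max \<sigma> r' (pot_win v' (m - length (butlast ws)) A0 (set (butlast ws)) - set (butlast ws)) (last ws)))"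
    using I unfolding Inv_def by simp
  have rsA: "rs \<subseteq> A" and AB: "A \<subseteq> B" and WA: "set ws \<subseteq> A"
    using I2 by blast+
  have "\<exists>A0. rs \<subseteq> A0 \<and> A0 \<subseteq> B \<and> set (butlast ws) \<subseteq> A0 \<and>
      (\<forall>x. \<not> closure_cand m v' r' A0 (butlast ws) x) \<and>
      prio_max \<sigma> r' (pot_win v' (m - length (butlast ws)) A0 (set (butlast ws)) - set (butlast ws)) (last ws)"
    using I2 assms(8) by blast
  then obtain A0 where rsA0: "rs \<subseteq> A0" and A0B: "A0 \<subseteq> B" and W0A0: "set (butlast ws) \<subseteq> A0"
    and noclos0: "\<forall>x. \<not> closure_cand m v' r' A0 (butlast ws) x"
    and pm: "prio_max \<sigma> r' (pot_win v' (m - length (butlast ws)) A0 (set (butlast ws)) - set (butlast ws)) (last ws)"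
    by blast
  have finA: "finite A" using AB assms(1) finite_subset by blast
  have finA0: "finite A0" using A0B assms(1) finite_subset by blast
  define W where "W = set ws"
  define w where "w = last ws"
  define W0 where "W0 = set (butlast ws)"
  define k0 where "k0 = m - length (butlast ws)"
  define P0 where "P0 = pot_win v' k0 A0 W0"
  have W0W: "W0 \<subseteq> W" unfolding W0_def W_def by (meson in_set_butlastD subsetI)
  have wW: "w \<in> W" unfolding w_def W_def using assms(8) by simp
  have wP0: "w \<in> P0 - W0" using pm unfolding prio_max_def P0_def W0_def k0_def w_def by blast
  have yW: "y \<notin> W" using assms(10) unfolding W_def by auto
  have crit: "critical rs r' w y"
    unfolding critical_def
  proof (intro allI impI)
    fix p assume path: "pg_path rs r' y p"
    show "Some w \<in> set p"
    proof (rule ccontr)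
      assume nw: "Some w \<notin> set p"
      have clA: "\<forall>a\<in>A. r' a \<subseteq> A"
      proof
        fix a assume a: "a \<in> A"
        have "a \<in> set ws \<union> (A - pot_win v' (m - length ws) A (set ws))"
          using a Pempty by blast
        then show "r' a \<subseteq> A" using noclos unfolding closure_cand_def by blast
      qed
      have yA: "y \<in> A" using path_in[OF path rsA] clA by blast
      have k: "m - length ws = 0"
      proof (rule ccontr)
        assume k1: "m - length ws \<noteq> 0"
        show False
        proof (cases "card (A - set ws) \<le> m - length ws")
          case True
          then have "pot_win v' (m - length ws) A (set ws) = A" by (simp add: pot_win_def)
          then show False using Pempty yA yW unfolding W_def by blast
        next
          case False
          then have pw: "pot_win v' (m - length ws) A (set ws) = set ws \<union> top_k v' (m - length ws) (A - set ws)"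
            by (simp add: pot_win_def)
          obtain x where x: "x \<in> A - set ws" "\<forall>z\<in>A - set ws. \<not> val_better v' z x"
            using best_exists[of "A - set ws" v'] finA yA yW unfolding W_def by blast
          have e: "{z \<in> A - set ws. val_better v' z x} = {}" using x(2) by blast
          have "card {z \<in> A - set ws. val_better v' z x} < m - length ws"
            unfolding e using k1 by simp
          then have "x \<in> top_k v' (m - length ws) (A - set ws)"
            using x(1) unfolding top_k_def by blast
          then show False using Pempty pw x(1) by blast
        qed
      qed
      have k0le: "k0 \<le> 1" unfolding k0_def using k by simp
      have K: "False" if x: "x \<in> A0 - W0" "x \<noteq> w" "x \<in> P0 \<or> val_better v' x w" for x
      proof (cases "card (A0 - W0) \<le> k0")
        case True
        then have "P0 = A0" by (simp add: P0_def pot_win_def)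
        then have "w \<in> A0 - W0" using wP0 by blast
        moreover have "finite (A0 - W0)" using finA0 by simp
        moreover have "card (A0 - W0) \<le> Suc 0" using True k0le by simp
        ultimately have "\<forall>a1\<in>A0 - W0. \<forall>a2\<in>A0 - W0. a1 = a2"
          using card_le_Suc0_iff_eq[of "A0 - W0"] by blast
        then show False using x(1,2) \<open>w \<in> A0 - W0\<close> by blast
      next
        case False
        then have P0e: "P0 = W0 \<union> top_k v' k0 (A0 - W0)" by (simp add: P0_def pot_win_def)
        have nob: "{z \<in> A0 - W0. val_better v' z u} = {}" if "u \<in> P0 - W0" for u
        proof -
          have "card {z \<in> A0 - W0. val_better v' z u} < k0"
          proof -
            have "u \<in> top_k v' k0 (A0 - W0)" using that P0e by blast
            then show ?thesis unfolding top_k_def by blast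
          qed
          then have "card {z \<in> A0 - W0. val_better v' z u} = 0" using k0le by simp
          moreover have "finite {z \<in> A0 - W0. val_better v' z u}" using finA0 by simp
          ultimately show ?thesis by simp
        qed
        have nw: "\<not> val_better v' x w" using empty_coll[OF nob[OF wP0] x(1)] .
        show False
        proof (cases "x \<in> P0")
          case True
          have xP: "x \<in> P0 - W0" using True x(1) by blast
          have "\<not> val_better v' w x" using empty_coll[OF nob[OF xP], of w] wP0 P0e top_k_sub[of v' k0 "A0 - W0"] by blast
          then show False using val_total[of v' w x] nw x(2) by blast
        next
          case False
          then show False using x(3) nw by blast
        qed
      qed
      have cl0: "\<forall>a. Some a \<in> set p \<longrightarrow> a \<in> A0 \<longrightarrow> r' a \<subseteq> A0"
      proof (intro allI impI)
        fix a assume a: "Some a \<in> set p" "a \<in> A0"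
        have aw: "a \<noteq> w" using a(1) nw by blast
        have "a \<in> W0 \<union> (A0 - P0)" using K[of a] a(2) aw by blast
        then show "r' a \<subseteq> A0" using noclos0 unfolding closure_cand_def W0_def P0_def k0_def
          by blast
      qed
      have yA0: "y \<in> A0" using path_in[OF path rsA0 cl0] .
      have "y \<noteq> w" using assms(10) wW unfolding W_def by auto
      moreover have "val_better v' y w" using assms(10) wW unfolding W_def val_better_def by auto
      moreover have "y \<in> A0 - W0" using yA0 yW W0W by blast
      ultimately show False using K by blast
    qed
  qed
  then show ?thesis unfolding w_def by (simp add: Bstar_def)
qed

end
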